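(* Let $1\le d\le n-2$ and let $H$ be a $d$-hypercut over $[n]$. Then the facet graph $G_d(H)$ is $(n-d-1)$-connected.
   Context: Fix a field $\mathbb F$. A $d$-simplex is a $(d+1)$-element subset of $[n]$ oriented by increasing order. For a simplex $\rho$ and $\tau=\rho\setminus\{p\}$ with $p$ the $i$-th smallest element of $\rho$, $\mathrm{sign}(\rho,\tau)=(-1)^{i-1}$. A $d$-cochain is a formal $\mathbb F$-combination of $d$-simplices; the coboundary is $\delta\tau=\sum_{p\in[n]\setminus\tau}\mathrm{sign}(\tau\cup\{p\},\tau)(\tau\cup\{p\})$, extended linearly. A $d$-cocycle is a $d$-cochain $Z$ with $\delta Z=0$; a $d$-hypercut is a nonzero $d$-cocycle $H$ such that every $d$-cocycle supported in $\mathrm{Supp}(H)$ is a scalar multiple of $H$. The facet graph $G_d(H)$ has vertex set $\mathrm{Supp}(H)$, two $d$-simplices adjacent iff they share a $(d-1)$-face. A graph is $k$-connected if deleting any set of fewer than $k$ of its vertices leaves a nonempty connected graph. *)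

theory Defs
  imports Main
begin

text \<open>Simplices over [n] = {1..n} are represented as finite sets of naturals,
  oriented by increasing order. Cochains are functions from sets to the field,
  supported on d-simplices.\<close>

definition simplex :: "nat \<Rightarrow> nat \<Rightarrow> nat set \<Rightarrow> bool" where
  "simplex n d \<sigma> \<longleftrightarrow> \<sigma> \<subseteq> {1..n} \<and> card \<sigma> = d + 1"

text \<open>sign(rho, rho - {p}) = (-1)^(i-1) where p is the i-th smallest element of rho;
  i - 1 is the number of elements of rho smaller than p.\<close>
definition simp_sign :: "nat set \<Rightarrow> nat \<Rightarrow> 'a::field" where
  "simp_sign \<rho> p = (-1) ^ card {q \<in> \<rho>. q < p}"

definition cochain :: "nat \<Rightarrow> nat \<Rightarrow> (nat set \<Rightarrow> 'a::field) \<Rightarrow> bool" where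
  "cochain n d Z \<longleftrightarrow> (\<forall>\<sigma>. Z \<sigma> \<noteq> 0 \<longrightarrow> simplex n d \<sigma>)"

text \<open>Coefficient of rho in the coboundary: the linear extension of
  delta tau = sum over p not in tau of sign(tau + p, tau) (tau + p).\<close>
definition coboundary :: "nat \<Rightarrow> (nat set \<Rightarrow> 'a::field) \<Rightarrow> nat set \<Rightarrow> 'a" where
  "coboundary n Z \<rho> = (if \<rho> \<subseteq> {1..n} then (\<Sum>p\<in>\<rho>. simp_sign \<rho> p * Z (\<rho> - {p})) else 0)"

definition cocycle :: "nat \<Rightarrow> nat \<Rightarrow> (nat set \<Rightarrow> 'a::field) \<Rightarrow> bool" where
  "cocycle n d Z \<longleftrightarrow> cochain n d Z \<and> (\<forall>\<rho>. coboundary n Z \<rho> = 0)"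

definition Supp :: "(nat set \<Rightarrow> 'a::zero) \<Rightarrow> nat set set" where
  "Supp Z = {\<sigma>. Z \<sigma> \<noteq> 0}"

definition hypercut :: "nat \<Rightarrow> nat \<Rightarrow> (nat set \<Rightarrow> 'a::field) \<Rightarrow> bool" where
  "hypercut n d H \<longleftrightarrow> cocycle n d H \<and> H \<noteq> (\<lambda>_. 0) \<and>
     (\<forall>Z. cocycle n d Z \<and> Supp Z \<subseteq> Supp H \<longrightarrow> (\<exists>c. Z = (\<lambda>\<sigma>. c * H \<sigma>)))"

definition facet_adj :: "nat set \<Rightarrow> nat set \<Rightarrow> bool" where
  "facet_adj \<sigma> \<tau> \<longleftrightarrow> \<sigma> \<noteq> \<tau> \<and> (\<exists>f. f \<subseteq> \<sigma> \<and> f \<subseteq> \<tau> \<and> card f + 1 = card \<sigma> \<and> finite f)"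

definition graph_connected :: "'v set \<Rightarrow> ('v \<Rightarrow> 'v \<Rightarrow> bool) \<Rightarrow> bool" where
  "graph_connected V E \<longleftrightarrow> V \<noteq> {} \<and>
     (\<forall>u\<in>V. \<forall>v\<in>V. (u, v) \<in> {(x, y). x \<in> V \<and> y \<in> V \<and> E x y}\<^sup>*)"

definition k_connected :: "'v set \<Rightarrow> ('v \<Rightarrow> 'v \<Rightarrow> bool) \<Rightarrow> nat \<Rightarrow> bool" where
  "k_connected V E k \<longleftrightarrow> (\<forall>S. S \<subseteq> V \<and> card S < k \<longrightarrow> graph_connected (V - S) E)"

end

theory Submission
  imports Defs
begin

definition cob :: "(nat set \<Rightarrow> 'a::field) \<Rightarrow> nat set \<Rightarrow> 'a" where
  "cob Z \<rho> = (\<Sum>p\<in>\<rho>. simp_sign \<rho> p * Z (\<rho> - {p}))"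

definition inK :: "nat set set \<Rightarrow> nat set \<Rightarrow> bool" where
  "inK S \<sigma> \<longleftrightarrow> (\<forall>s\<in>S. \<not> s \<subseteq> \<sigma>)"

lemma simp_sign_remove_less:
  assumes "finite \<rho>" "p \<in> \<rho>" "p < q"
  shows "simp_sign (\<rho> - {p}) q = - (simp_sign \<rho> q :: 'a::field)"
proof -
  have e: "{x \<in> \<rho>. x < q} = insert p {x \<in> \<rho> - {p}. x < q}" using assms by auto
  have "card {x \<in> \<rho>. x < q} = Suc (card {x \<in> \<rho> - {p}. x < q})"
    unfolding e using assms(1) by (subst card_insert_disjoint) auto
  thus ?thesis by (simp add: simp_sign_def)
qed

lemma simp_sign_remove_greater:
  assumes "p < q" shows "simp_sign (\<rho> - {q}) p = simp_sign \<rho> p"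
proof -
  have "{x \<in> \<rho> - {q}. x < p} = {x \<in> \<rho>. x < p}" using assms by auto
  thus ?thesis by (simp add: simp_sign_def)
qed

lemma simp_sign_nz: "simp_sign \<rho> p \<noteq> (0::'a::field)"
  by (simp add: simp_sign_def)

lemma cob_cob: "cob (cob f) \<rho> = (0::'a::field)"
proof (cases "finite \<rho>")
  case False then show ?thesis by (simp add: cob_def)
next
  case True
  define G where "G = (\<lambda>p q. simp_sign \<rho> p * simp_sign (\<rho> - {p}) q * f (\<rho> - {p} - {q}) :: 'a)"
  have "cob (cob f) \<rho> = (\<Sum>p\<in>\<rho>. \<Sum>q\<in>\<rho> - {p}. G p q)"
    by (simp add: cob_def G_def sum_distrib_left mult.assoc)
  also have "\<dots> = (\<Sum>(p,q)\<in>(SIGMA p:\<rho>. \<rho> - {p}). G p q)"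
    by (rule sum.Sigma) (use True in auto)
  also have "(SIGMA p:\<rho>. \<rho> - {p}) = {(p,q). p\<in>\<rho> \<and> q\<in>\<rho> \<and> p<q} \<union> {(p,q). p\<in>\<rho> \<and> q\<in>\<rho> \<and> q<p}"
    by auto
  also have "(\<Sum>(p,q)\<in>{(p,q). p\<in>\<rho> \<and> q\<in>\<rho> \<and> p<q} \<union> {(p,q). p\<in>\<rho> \<and> q\<in>\<rho> \<and> q<p}. G p q)
     = (\<Sum>(p,q)\<in>{(p,q). p\<in>\<rho> \<and> q\<in>\<rho> \<and> p<q}. G p q) + (\<Sum>(p,q)\<in>{(p,q). p\<in>\<rho> \<and> q\<in>\<rho> \<and> q<p}. G p q)"
  proof (rule sum.union_disjoint)
    show "finite {(p,q). p\<in>\<rho> \<and> q\<in>\<rho> \<and> p<q}"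
      by (rule finite_subset[of _ "\<rho> \<times> \<rho>"]) (use True in auto)
    show "finite {(p,q). p\<in>\<rho> \<and> q\<in>\<rho> \<and> q<p}"
      by (rule finite_subset[of _ "\<rho> \<times> \<rho>"]) (use True in auto)
  qed auto
  also have "{(p,q). p\<in>\<rho> \<and> q\<in>\<rho> \<and> q<p} = prod.swap ` {(p,q). p\<in>\<rho> \<and> q\<in>\<rho> \<and> p<q}"
    by auto
  also have "(\<Sum>(p,q)\<in>prod.swap ` {(p,q). p\<in>\<rho> \<and> q\<in>\<rho> \<and> p<q}. G p q)
      = (\<Sum>(p,q)\<in>{(p,q). p\<in>\<rho> \<and> q\<in>\<rho> \<and> p<q}. G q p)"
    by (subst sum.reindex) (auto simp: inj_on_def)
  also have "(\<Sum>(p,q)\<in>{(p,q). p\<in>\<rho> \<and> q\<in>\<rho> \<and> p<q}. G q p)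
      = (\<Sum>x\<in>{(p,q). p\<in>\<rho> \<and> q\<in>\<rho> \<and> p<q}. - (case x of (p,q) \<Rightarrow> G p q))"
  proof (rule sum.cong)
    fix x assume "x \<in> {(p,q). p\<in>\<rho> \<and> q\<in>\<rho> \<and> p<q}"
    then obtain p q where x: "x = (p,q)" "p \<in> \<rho>" "q \<in> \<rho>" "p < q" by auto
    have d: "\<rho> - {q} - {p} = \<rho> - {p} - {q}" by auto
    show "(case x of (p,q) \<Rightarrow> G q p) = - (case x of (p,q) \<Rightarrow> G p q)"
      using x simp_sign_remove_less[OF True x(2) x(4), where 'a='a]
        simp_sign_remove_greater[OF x(4), of \<rho>, where 'a='a]
      by (simp add: G_def d)
  qed simp
  finally show ?thesis by (simp add: sum_negf)
qed

lemma cob_diff: "cob (\<lambda>\<tau>. a \<tau> - b \<tau>) \<rho> = cob a \<rho> - (cob b \<rho> :: 'a::field)"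
  by (simp add: cob_def sum_subtractf right_diff_distrib)

lemma cob_scale: "cob (\<lambda>\<tau>. c * a \<tau>) \<rho> = c * (cob a \<rho> :: 'a::field)"
  by (simp add: cob_def sum_distrib_left algebra_simps)

lemma cob_cong: "(\<And>p. p \<in> \<rho> \<Longrightarrow> a (\<rho> - {p}) = b (\<rho> - {p})) \<Longrightarrow> cob a \<rho> = (cob b \<rho> :: 'a::field)"
  by (simp add: cob_def)

lemma cob_zero: "cob (\<lambda>_. 0) \<rho> = (0::'a::field)"
  by (simp add: cob_def)

lemma cob_insert_max:
  assumes "finite \<sigma>" "v \<notin> \<sigma>" "\<forall>p\<in>\<sigma>. p < v"
  shows "cob Z (insert v \<sigma>) = cob (\<lambda>\<tau>. Z (insert v \<tau>)) \<sigma> + (-1)^card \<sigma> * (Z \<sigma> :: 'a::field)"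
proof -
  have "cob Z (insert v \<sigma>) = simp_sign (insert v \<sigma>) v * Z (insert v \<sigma> - {v})
      + (\<Sum>p\<in>\<sigma>. simp_sign (insert v \<sigma>) p * Z (insert v \<sigma> - {p}))"
    by (simp add: cob_def assms)
  also have "{q \<in> insert v \<sigma>. q < v} = \<sigma>" using assms by auto
  hence "simp_sign (insert v \<sigma>) v = ((-1)^card \<sigma> :: 'a)" by (simp add: simp_sign_def)
  also have "insert v \<sigma> - {v} = \<sigma>" using assms by auto
  also have "(\<Sum>p\<in>\<sigma>. simp_sign (insert v \<sigma>) p * Z (insert v \<sigma> - {p}))
      = (\<Sum>p\<in>\<sigma>. simp_sign \<sigma> p * Z (insert v (\<sigma> - {p})))"
  proof (rule sum.cong)
    fix p assume p: "p \<in> \<sigma>"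
    have "{q \<in> insert v \<sigma>. q < p} = {q \<in> \<sigma>. q < p}" using assms p by auto
    moreover have "insert v \<sigma> - {p} = insert v (\<sigma> - {p})" using assms p by auto
    ultimately show "simp_sign (insert v \<sigma>) p * Z (insert v \<sigma> - {p}) = simp_sign \<sigma> p * Z (insert v (\<sigma> - {p}))"
      by (simp add: simp_sign_def)
  qed simp
  finally show ?thesis by (simp add: cob_def add.commute)
qed

lemma keyP:
  fixes Z :: "nat set \<Rightarrow> 'a::field"
  shows "finite U \<Longrightarrow> S \<subseteq> Pow U \<Longrightarrow> card S + k + 1 \<le> card U \<Longrightarrow>
    (\<And>\<rho>. \<rho> \<subseteq> U \<Longrightarrow> card \<rho> = Suc k \<Longrightarrow> inK S \<rho> \<Longrightarrow> cob Z \<rho> = 0) \<Longrightarrow>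
    \<exists>f. \<forall>\<sigma>. \<sigma> \<subseteq> U \<longrightarrow> card \<sigma> = k \<longrightarrow> inK S \<sigma> \<longrightarrow> cob f \<sigma> = Z \<sigma>"
proof (induction "card U" arbitrary: U S k Z rule: less_induct)
  case less
  note finU = less.prems(1) and SU = less.prems(2) and bnd = less.prems(3) and hyp = less.prems(4)
  have finS: "finite S" using SU finU by (meson finite_Pow_iff finite_subset)
  show ?case
  proof (cases k)
    case 0
    show ?thesis
    proof (intro exI allI impI)
      fix \<sigma> :: "nat set" assume s: "\<sigma> \<subseteq> U" "card \<sigma> = k" "inK S \<sigma>"
      have "finite \<sigma>" using s finU finite_subset by blast
      hence se: "\<sigma> = {}" using s 0 by simp
      obtain x where x: "x \<in> U" "{x} \<notin> S"
      proof (rule ccontr)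
        assume "\<not> thesis"
        hence "(\<lambda>x. {x}) ` U \<subseteq> S" using that by blast
        hence "card ((\<lambda>x. {x}) ` U) \<le> card S" using finS by (rule card_mono[rotated])
        moreover have "card ((\<lambda>x. {x}) ` U) = card U" by (rule card_image) (auto simp: inj_on_def)
        ultimately show False using bnd by simp
      qed
      have "inK S {x}"
        unfolding inK_def
      proof
        fix t assume t: "t \<in> S"
        show "\<not> t \<subseteq> {x}"
        proof
          assume "t \<subseteq> {x}"
          hence "t = {} \<or> t = {x}" by auto
          thus False using t x s(3) se unfolding inK_def by auto
        qed
      qed
      hence z0: "cob Z {x} = 0" using hyp[of "{x}"] x 0 by simp
      have e: "{q. q = x \<and> q < x} = {}" by auto
      have "cob Z {x} = Z {}" by (simp add: cob_def simp_sign_def e)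
      with z0 have "Z {} = 0" by simp
      then show "cob (\<lambda>_. 0) \<sigma> = Z \<sigma>" using se by (simp add: cob_def)
    qed
  next
    case (Suc k')
    have Une: "U \<noteq> {}" using bnd by auto
    define v where "v = Max U"
    have vU: "v \<in> U" using Une finU by (simp add: v_def)
    have vmax: "\<And>p. p \<in> U \<Longrightarrow> p \<noteq> v \<Longrightarrow> p < v"
      using finU v_def by (metis Max_ge le_neq_implies_less)
    define U' where "U' = U - {v}"
    have finU': "finite U'" using finU by (simp add: U'_def)
    have cU': "card U' = card U - 1" using vU finU by (simp add: U'_def)
    have ltU: "card U' < card U" using vU finU U'_def by (simp add: card_gt_0_iff cU' Une)
    define Sv where "Sv = {s\<in>S. v \<in> s}"
    define Sn where "Sn = {s\<in>S. v \<notin> s}"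
    define T where "T = (\<lambda>s. s - {v}) ` Sv \<union> Sn"
    define Zl where "Zl = (\<lambda>\<tau>. Z (insert v \<tau>))"
    define c where "c = (\<lambda>\<sigma>. (-1)^k' * Z \<sigma>)"
    have sub': "\<And>\<sigma>. \<sigma> \<subseteq> U' \<Longrightarrow> \<forall>p\<in>\<sigma>. p < v" using vmax U'_def by auto
    have fin': "\<And>\<sigma>. \<sigma> \<subseteq> U' \<Longrightarrow> finite \<sigma>" using finU' finite_subset by blast
    have nv: "\<And>\<sigma>. \<sigma> \<subseteq> U' \<Longrightarrow> v \<notin> \<sigma>" using U'_def by auto
    have linkeq: "\<And>\<sigma>. \<sigma> \<subseteq> U' \<Longrightarrow> card \<sigma> = k \<Longrightarrow> inK S (insert v \<sigma>) \<Longrightarrow> cob Zl \<sigma> = c \<sigma>"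
    proof -
      fix \<sigma> assume a: "\<sigma> \<subseteq> U'" "card \<sigma> = k" "inK S (insert v \<sigma>)"
      have "cob Z (insert v \<sigma>) = 0"
        using hyp[of "insert v \<sigma>"] a vU U'_def fin'[OF a(1)] nv[OF a(1)] by auto
      moreover have "cob Z (insert v \<sigma>) = cob Zl \<sigma> + (-1)^card \<sigma> * Z \<sigma>"
        unfolding Zl_def by (rule cob_insert_max[OF fin'[OF a(1)] nv[OF a(1)] sub'[OF a(1)]])
      ultimately show "cob Zl \<sigma> = c \<sigma>" using a(2) Suc by (simp add: c_def add_eq_0_iff)
    qed
    have inKT: "\<And>\<tau>. inK T \<tau> \<Longrightarrow> inK S (insert v \<tau>)"
    proof -
      fix \<tau> assume a: "inK T \<tau>"
      show "inK S (insert v \<tau>)" unfolding inK_def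
      proof (intro ballI notI)
        fix s assume s: "s \<in> S" "s \<subseteq> insert v \<tau>"
        show False
        proof (cases "v \<in> s")
          case True
          hence "s - {v} \<in> T" using s(1) by (auto simp: T_def Sv_def)
          moreover have "s - {v} \<subseteq> \<tau>" using s(2) by auto
          ultimately show False using a by (auto simp: inK_def)
        next
          case False
          hence "s \<in> T" using s(1) by (auto simp: T_def Sn_def)
          moreover have "s \<subseteq> \<tau>" using s(2) False by auto
          ultimately show False using a by (auto simp: inK_def)
        qed
      qed
    qed
    have TSn: "\<And>\<tau>. inK T \<tau> \<Longrightarrow> inK Sn \<tau>" unfolding inK_def T_def by blast
    obtain x where xA: "\<forall>\<sigma>. \<sigma> \<subseteq> U' \<longrightarrow> card \<sigma> = k \<longrightarrow> inK Sn \<sigma> \<longrightarrow> cob x \<sigma> = c \<sigma>"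
      and xB: "\<forall>\<tau>. \<tau> \<subseteq> U' \<longrightarrow> card \<tau> = k' \<longrightarrow> inK T \<tau> \<longrightarrow> x \<tau> = Zl \<tau>"
    proof (cases "Sv = {}")
      case True
      show ?thesis
      proof (rule that[of Zl])
        show "\<forall>\<sigma>. \<sigma> \<subseteq> U' \<longrightarrow> card \<sigma> = k \<longrightarrow> inK Sn \<sigma> \<longrightarrow> cob Zl \<sigma> = c \<sigma>"
        proof (intro allI impI)
          fix \<sigma> assume a: "\<sigma> \<subseteq> U'" "card \<sigma> = k" "inK Sn \<sigma>"
          have "inK S (insert v \<sigma>)" using a(3) True unfolding inK_def Sn_def Sv_def by blast
          thus "cob Zl \<sigma> = c \<sigma>" using linkeq a by blast
        qed
      qed simp
    next
      case False
      have SvSn: "S = Sv \<union> Sn" "Sv \<inter> Sn = {}" by (auto simp: Sv_def Sn_def)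
      have cS: "card S = card Sv + card Sn"
        using SvSn finS by (metis card_Un_disjoint finite_Un)
      have "card Sv > 0" using False finS by (simp add: Sv_def card_gt_0_iff)
      hence cSn: "card Sn + k + 1 \<le> card U'" using cS bnd cU' by linarith
      have SnU': "Sn \<subseteq> Pow U'" using SU by (auto simp: Sn_def U'_def)
      obtain x1 where x1: "\<forall>\<sigma>. \<sigma> \<subseteq> U' \<longrightarrow> card \<sigma> = k \<longrightarrow> inK Sn \<sigma> \<longrightarrow> cob x1 \<sigma> = c \<sigma>"
      proof -
        have "\<exists>f. \<forall>\<sigma>. \<sigma> \<subseteq> U' \<longrightarrow> card \<sigma> = k \<longrightarrow> inK Sn \<sigma> \<longrightarrow> cob f \<sigma> = c \<sigma>"
        proof (rule less.hyps[OF ltU finU' SnU' cSn])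
          fix \<rho> assume a: "\<rho> \<subseteq> U'" "card \<rho> = Suc k" "inK Sn \<rho>"
          have "inK S \<rho>" using a(3) nv[OF a(1)] unfolding inK_def Sn_def by blast
          hence "cob Z \<rho> = 0" using hyp[of \<rho>] a U'_def by auto
          thus "cob c \<rho> = 0" unfolding c_def by (simp add: cob_scale)
        qed
        thus ?thesis using that by blast
      qed
      define w where "w = (\<lambda>\<tau>. x1 \<tau> - Zl \<tau>)"
      have TU': "T \<subseteq> Pow U'" using SU by (auto simp: T_def Sv_def Sn_def U'_def)
      have "card T \<le> card ((\<lambda>s. s - {v}) ` Sv) + card Sn" unfolding T_def by (rule card_Un_le)
      also have "card ((\<lambda>s. s - {v}) ` Sv) \<le> card Sv" using finS by (simp add: Sv_def card_image_le)
      finally have cT: "card T + k' + 1 \<le> card U'" using cS bnd cU' Suc by linarith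
      obtain q where q: "\<forall>\<tau>. \<tau> \<subseteq> U' \<longrightarrow> card \<tau> = k' \<longrightarrow> inK T \<tau> \<longrightarrow> cob q \<tau> = w \<tau>"
      proof -
        have "\<exists>f. \<forall>\<tau>. \<tau> \<subseteq> U' \<longrightarrow> card \<tau> = k' \<longrightarrow> inK T \<tau> \<longrightarrow> cob f \<tau> = w \<tau>"
        proof (rule less.hyps[OF ltU finU' TU' cT])
          fix \<rho> assume a: "\<rho> \<subseteq> U'" "card \<rho> = Suc k'" "inK T \<rho>"
          have "cob x1 \<rho> = c \<rho>" using x1 a TSn Suc by auto
          moreover have "cob Zl \<rho> = c \<rho>" using linkeq[of \<rho>] a inKT Suc by auto
          ultimately show "cob w \<rho> = 0" unfolding w_def by (simp add: cob_diff)
        qed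
        thus ?thesis using that by blast
      qed
      show ?thesis
      proof (rule that[of "\<lambda>\<tau>. x1 \<tau> - cob q \<tau>"])
        show "\<forall>\<sigma>. \<sigma> \<subseteq> U' \<longrightarrow> card \<sigma> = k \<longrightarrow> inK Sn \<sigma> \<longrightarrow> cob (\<lambda>\<tau>. x1 \<tau> - cob q \<tau>) \<sigma> = c \<sigma>"
          using x1 by (simp add: cob_diff cob_cob)
        show "\<forall>\<tau>. \<tau> \<subseteq> U' \<longrightarrow> card \<tau> = k' \<longrightarrow> inK T \<tau> \<longrightarrow> x1 \<tau> - cob q \<tau> = Zl \<tau>"
          using q by (simp add: w_def)
      qed
    qed
    define f where "f = (\<lambda>\<tau>. if v \<in> \<tau> then 0 else (-1)^k' * x \<tau>)"
    show ?thesis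
    proof (intro exI[of _ f] allI impI)
      fix \<sigma> assume a: "\<sigma> \<subseteq> U" "card \<sigma> = k" "inK S \<sigma>"
      show "cob f \<sigma> = Z \<sigma>"
      proof (cases "v \<in> \<sigma>")
        case True
        define \<tau> where "\<tau> = \<sigma> - {v}"
        have t: "\<tau> \<subseteq> U'" "\<sigma> = insert v \<tau>" using a True by (auto simp: \<tau>_def U'_def)
        have ct: "card \<tau> = k'" using a Suc t fin'[OF t(1)] nv[OF t(1)] by simp
        have "cob f \<sigma> = cob (\<lambda>\<tau>. f (insert v \<tau>)) \<tau> + (-1)^card \<tau> * f \<tau>"
          unfolding t(2) by (rule cob_insert_max[OF fin'[OF t(1)] nv[OF t(1)] sub'[OF t(1)]])
        also have "(\<lambda>\<tau>. f (insert v \<tau>)) = (\<lambda>_. 0)" by (simp add: f_def)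
        also have "(-1)^card \<tau> * f \<tau> = x \<tau>"
          using nv[OF t(1)] ct by (simp add: f_def flip: mult.assoc power_add)
        also have "inK T \<tau>" unfolding inK_def
        proof (intro ballI notI)
          fix r assume r: "r \<in> T" "r \<subseteq> \<tau>"
          show False
          proof (cases "r \<in> Sn")
            case True
            hence "r \<in> S" "r \<subseteq> \<sigma>" using r t by (auto simp: Sn_def)
            thus False using a(3) by (auto simp: inK_def)
          next
            case False
            then obtain s where "s \<in> Sv" "r = s - {v}" using r(1) by (auto simp: T_def)
            hence "s \<in> S" "s \<subseteq> \<sigma>" using r t by (auto simp: Sv_def)
            thus False using a(3) by (auto simp: inK_def)
          qed
        qed
        hence "x \<tau> = Zl \<tau>" using xB t ct by blast
        finally show ?thesis using t by (simp add: cob_zero Zl_def)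
      next
        case False
        have s': "\<sigma> \<subseteq> U'" using a False by (auto simp: U'_def)
        have "cob f \<sigma> = cob (\<lambda>\<tau>. (-1)^k' * x \<tau>) \<sigma>"
          by (rule cob_cong) (use False in \<open>simp add: f_def\<close>)
        also have "\<dots> = (-1)^k' * cob x \<sigma>" by (rule cob_scale)
        also have "inK Sn \<sigma>" using a(3) unfolding inK_def Sn_def by blast
        hence "cob x \<sigma> = c \<sigma>" using xA s' a by blast
        finally show ?thesis by (simp add: c_def flip: mult.assoc power_add)
      qed
    qed
  qed
qed

lemma supp_basic:
  fixes H :: "nat set \<Rightarrow> 'a::field"
  assumes hc: "hypercut n d H"
  shows "finite (Supp H)" "\<And>\<sigma>. \<sigma> \<in> Supp H \<Longrightarrow> simplex n d \<sigma>"
proof -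
  have co: "cochain n d H" using hc by (simp add: hypercut_def cocycle_def)
  show sp: "\<And>\<sigma>. \<sigma> \<in> Supp H \<Longrightarrow> simplex n d \<sigma>" using co by (simp add: Supp_def cochain_def)
  have "Supp H \<subseteq> Pow {1..n}" using sp by (auto simp: simplex_def)
  thus "finite (Supp H)" by (rule finite_subset) simp
qed

lemma supp_big:
  fixes H :: "nat set \<Rightarrow> 'a::field"
  assumes hc: "hypercut n d H"
  shows "n - d \<le> card (Supp H)"
proof -
  have co: "cocycle n d H" and nz: "H \<noteq> (\<lambda>_. 0)" using hc by (auto simp: hypercut_def)
  have cb: "\<And>\<rho>. coboundary n H \<rho> = 0" using co by (simp add: cocycle_def)
  obtain \<sigma> where s: "H \<sigma> \<noteq> 0" using nz by auto
  have ss: "simplex n d \<sigma>" using supp_basic(2)[OF hc] s by (simp add: Supp_def)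
  have finV: "finite (Supp H)" by (rule supp_basic(1)[OF hc])
  have fs: "finite \<sigma>" using ss by (meson finite_atLeastAtMost finite_subset simplex_def)
  have ex: "\<And>p. p \<in> {1..n} - \<sigma> \<Longrightarrow> \<exists>y. y \<in> Supp H \<and> p \<in> y \<and> y \<subseteq> insert p \<sigma>"
  proof -
    fix p assume p: "p \<in> {1..n} - \<sigma>"
    have sub: "insert p \<sigma> \<subseteq> {1..n}" using p ss by (auto simp: simplex_def)
    have "0 = coboundary n H (insert p \<sigma>)" using cb by simp
    also have "\<dots> = simp_sign (insert p \<sigma>) p * H \<sigma> + (\<Sum>q\<in>\<sigma>. simp_sign (insert p \<sigma>) q * H (insert p \<sigma> - {q}))"
      using sub p fs by (simp add: coboundary_def)
    finally have "(\<Sum>q\<in>\<sigma>. simp_sign (insert p \<sigma>) q * H (insert p \<sigma> - {q})) \<noteq> 0"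
      using s simp_sign_nz[of "insert p \<sigma>" p] by (auto simp: add_eq_0_iff)
    then obtain q where q: "q \<in> \<sigma>" "simp_sign (insert p \<sigma>) q * H (insert p \<sigma> - {q}) \<noteq> 0"
      by (meson sum.not_neutral_contains_not_neutral)
    show "\<exists>y. y \<in> Supp H \<and> p \<in> y \<and> y \<subseteq> insert p \<sigma>"
      by (rule exI[of _ "insert p \<sigma> - {q}"]) (use q p in \<open>auto simp: Supp_def\<close>)
  qed
  define g where "g = (\<lambda>p. SOME y. y \<in> Supp H \<and> p \<in> y \<and> y \<subseteq> insert p \<sigma>)"
  have g: "\<And>p. p \<in> {1..n} - \<sigma> \<Longrightarrow> g p \<in> Supp H \<and> p \<in> g p \<and> g p \<subseteq> insert p \<sigma>"
    unfolding g_def by (rule someI_ex) (rule ex)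
  have inj: "inj_on g ({1..n} - \<sigma>)"
  proof (rule inj_onI)
    fix p p' assume a: "p \<in> {1..n} - \<sigma>" "p' \<in> {1..n} - \<sigma>" "g p = g p'"
    have "p' \<in> insert p \<sigma>" using g[OF a(1)] g[OF a(2)] a(3) by auto
    thus "p = p'" using a by auto
  qed
  have im: "g ` ({1..n} - \<sigma>) \<subseteq> Supp H - {\<sigma>}" using g by fastforce
  have "card ({1..n} - \<sigma>) \<le> card (Supp H - {\<sigma>})"
    using card_inj_on_le[OF inj im] finV by simp
  moreover have "card ({1..n} - \<sigma>) = n - (d + 1)"
    using ss by (simp add: simplex_def card_Diff_subset fs)
  moreover have "card (Supp H - {\<sigma>}) = card (Supp H) - 1" using s finV by (simp add: Supp_def)
  moreover have "card (Supp H) > 0" using s finV by (auto simp: Supp_def card_gt_0_iff)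
  ultimately show ?thesis by linarith
qed

lemma inK_same_card:
  assumes "finite x" "\<forall>s\<in>S. card s = card x" "x \<notin> S"
  shows "inK S x"
  unfolding inK_def
proof (intro ballI notI)
  fix s assume s: "s \<in> S" "s \<subseteq> x"
  hence "s = x" using assms by (metis card_subset_eq)
  thus False using s assms by simp
qed

theorem theorem4p7:
  fixes H :: "nat set \<Rightarrow> 'a::field" and n d :: nat
  assumes "1 \<le> d" and "d + 2 \<le> n"
    and "hypercut n d H"
  shows "k_connected (Supp H) facet_adj (n - d - 1)"
proof -
  note hc = assms(3)
  have finV: "finite (Supp H)" and spl: "\<And>\<sigma>. \<sigma> \<in> Supp H \<Longrightarrow> simplex n d \<sigma>"
    using supp_basic[OF hc] by auto
  have cb: "\<And>\<rho>. coboundary n H \<rho> = 0" using hc by (simp add: hypercut_def cocycle_def)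
  have minimal: "\<And>Z. cocycle n d Z \<Longrightarrow> Supp Z \<subseteq> Supp H \<Longrightarrow> \<exists>c. Z = (\<lambda>\<sigma>. c * H \<sigma>)"
    using hc by (simp add: hypercut_def)
  have big: "n - d \<le> card (Supp H)" by (rule supp_big[OF hc])
  have finsp: "\<And>\<sigma>. simplex n d \<sigma> \<Longrightarrow> finite \<sigma>"
    by (meson finite_atLeastAtMost finite_subset simplex_def)
  show ?thesis unfolding k_connected_def
  proof (intro allI impI, elim conjE)
    fix S assume SV: "S \<subseteq> Supp H" and cS: "card S < n - d - 1"
    have finS: "finite S" using SV finV finite_subset by blast
    have Scard: "\<forall>s\<in>S. card s = Suc d" using SV spl by (auto simp: simplex_def)
    have inKx: "\<And>x. simplex n d x \<Longrightarrow> x \<notin> S \<Longrightarrow> inK S x"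
      using Scard finsp inK_same_card by (metis Suc_eq_plus1 simplex_def)
    define E where "E = {(x,y). x \<in> Supp H - S \<and> y \<in> Supp H - S \<and> facet_adj x y}"
    show "graph_connected (Supp H - S) facet_adj"
      unfolding graph_connected_def E_def[symmetric]
    proof (intro conjI ballI)
      show "Supp H - S \<noteq> {}"
      proof
        assume "Supp H - S = {}"
        hence "Supp H \<subseteq> S" by auto
        hence "card (Supp H) \<le> card S" using finS by (rule card_mono[rotated])
        thus False using big cS by linarith
      qed
    next
      fix u w assume u: "u \<in> Supp H - S" and w: "w \<in> Supp H - S"
      show "(u, w) \<in> E\<^sup>*"
      proof (rule ccontr)
        assume nc: "(u, w) \<notin> E\<^sup>*"
        have reach: "\<And>x. (u, x) \<in> E\<^sup>* \<Longrightarrow> x \<in> Supp H - S"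
        proof -
          fix x assume "(u, x) \<in> E\<^sup>*"
          thus "x \<in> Supp H - S"
            by (induction rule: rtrancl_induct) (use u in \<open>auto simp: E_def\<close>)
        qed
        have clos: "\<And>x y. (u, x) \<in> E\<^sup>* \<Longrightarrow> y \<in> Supp H - S \<Longrightarrow> facet_adj x y \<Longrightarrow> (u, y) \<in> E\<^sup>*"
        proof -
          fix x y assume a: "(u, x) \<in> E\<^sup>*" "y \<in> Supp H - S" "facet_adj x y"
          have "(x, y) \<in> E" using reach[OF a(1)] a by (simp add: E_def)
          with a(1) show "(u, y) \<in> E\<^sup>*" by (rule rtrancl_into_rtrancl)
        qed
        define Z0 where "Z0 = (\<lambda>\<sigma>. if (u, \<sigma>) \<in> E\<^sup>* then H \<sigma> else 0)"
        have SP: "S \<subseteq> Pow {1..n}" using SV spl by (auto simp: simplex_def)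
        have bnd: "card S + Suc d + 1 \<le> card {1..n}" using cS by simp
        have "\<exists>f. \<forall>\<sigma>. \<sigma> \<subseteq> {1..n} \<longrightarrow> card \<sigma> = Suc d \<longrightarrow> inK S \<sigma> \<longrightarrow> cob f \<sigma> = Z0 \<sigma>"
        proof (rule keyP[OF _ SP bnd])
          fix \<rho> assume r: "\<rho> \<subseteq> {1..n}" "card \<rho> = Suc (Suc d)" "inK S \<rho>"
          have fr: "finite \<rho>" using r(1) finite_subset by blast
          show "cob Z0 \<rho> = 0"
          proof (cases "\<exists>p\<in>\<rho>. (u, \<rho> - {p}) \<in> E\<^sup>*")
            case True
            then obtain p where p: "p \<in> \<rho>" "(u, \<rho> - {p}) \<in> E\<^sup>*" by blast
            have "cob Z0 \<rho> = cob H \<rho>"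
            proof (rule cob_cong)
              fix q assume q: "q \<in> \<rho>"
              show "Z0 (\<rho> - {q}) = H (\<rho> - {q})"
              proof (cases "H (\<rho> - {q}) = 0")
                case True thus ?thesis by (simp add: Z0_def)
              next
                case False
                have inS: "\<rho> - {q} \<in> Supp H - S"
                  using False r(3) by (auto simp: Supp_def inK_def)
                have "(u, \<rho> - {q}) \<in> E\<^sup>*"
                proof (cases "q = p")
                  case True thus ?thesis using p by simp
                next
                  case False
                  have "facet_adj (\<rho> - {p}) (\<rho> - {q})"
                    unfolding facet_adj_def
                  proof (intro conjI exI[of _ "\<rho> - {p} - {q}"])
                    show "\<rho> - {p} \<noteq> \<rho> - {q}" using False q by auto
                    show "card (\<rho> - {p} - {q}) + 1 = card (\<rho> - {p})"
                      using fr p q False r(2) by (simp add: card_Diff_singleton)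
                  qed (use fr in auto)
                  thus ?thesis using clos[OF p(2) inS] by simp
                qed
                thus ?thesis by (simp add: Z0_def)
              qed
            qed
            also have "\<dots> = coboundary n H \<rho>" using r(1) by (simp add: coboundary_def cob_def)
            finally show ?thesis using cb by simp
          next
            case False
            have "cob Z0 \<rho> = cob (\<lambda>_. 0) \<rho>"
              by (rule cob_cong) (use False in \<open>auto simp: Z0_def\<close>)
            thus ?thesis by (simp add: cob_zero)
          qed
        qed simp
        then obtain f where f: "\<And>\<sigma>. \<sigma> \<subseteq> {1..n} \<Longrightarrow> card \<sigma> = Suc d \<Longrightarrow> inK S \<sigma> \<Longrightarrow> cob f \<sigma> = Z0 \<sigma>"
          by blast
        define Z where "Z = (\<lambda>\<sigma>. if simplex n d \<sigma> then cob f \<sigma> else 0)"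
        have cocZ: "cocycle n d Z"
          unfolding cocycle_def
        proof (intro conjI allI)
          show "cochain n d Z" by (simp add: cochain_def Z_def)
          fix \<rho>
          show "coboundary n Z \<rho> = 0"
          proof (cases "\<rho> \<subseteq> {1..n}")
            case False thus ?thesis by (simp add: coboundary_def)
          next
            case True
            have fr: "finite \<rho>" using True finite_subset by blast
            have "coboundary n Z \<rho> = cob Z \<rho>" using True by (simp add: coboundary_def cob_def)
            also have "\<dots> = 0"
            proof (cases "card \<rho> = Suc (Suc d)")
              case True
              have "cob Z \<rho> = cob (cob f) \<rho>"
              proof (rule cob_cong)
                fix p assume "p \<in> \<rho>"
                hence "simplex n d (\<rho> - {p})" using True \<open>\<rho> \<subseteq> {1..n}\<close> fr
                  by (auto simp: simplex_def)
                thus "Z (\<rho> - {p}) = cob f (\<rho> - {p})" by (simp add: Z_def)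
              qed
              thus ?thesis by (simp add: cob_cob)
            next
              case False
              have "cob Z \<rho> = cob (\<lambda>_. 0) \<rho>"
              proof (rule cob_cong)
                fix p assume "p \<in> \<rho>"
                hence "card (\<rho> - {p}) \<noteq> d + 1" using False fr
                  by (simp add: card_Diff_singleton)
                thus "Z (\<rho> - {p}) = 0" by (simp add: Z_def simplex_def)
              qed
              thus ?thesis by (simp add: cob_zero)
            qed
            finally show ?thesis .
          qed
        qed
        have Zeq: "\<And>x. simplex n d x \<Longrightarrow> x \<notin> S \<Longrightarrow> Z x = Z0 x"
          using f inKx by (simp add: Z_def simplex_def)
        have "Supp Z \<subseteq> Supp H"
        proof
          fix x assume x: "x \<in> Supp Z"
          hence sx: "simplex n d x" by (auto simp: Supp_def Z_def split: if_splits)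
          show "x \<in> Supp H"
          proof (cases "x \<in> S")
            case True thus ?thesis using SV by auto
          next
            case False
            hence "Z0 x \<noteq> 0" using Zeq[OF sx False] x by (simp add: Supp_def)
            thus ?thesis by (simp add: Supp_def Z0_def split: if_splits)
          qed
        qed
        then obtain c where c: "Z = (\<lambda>\<sigma>. c * H \<sigma>)" using minimal cocZ by blast
        have Hu: "H u \<noteq> 0" "H w \<noteq> 0" using u w by (auto simp: Supp_def)
        have "Z u = H u" using Zeq[of u] spl u by (simp add: Z0_def)
        hence "c = 1" using c Hu by simp
        moreover have "Z w = 0" using Zeq[of w] spl w nc by (simp add: Z0_def)
        ultimately show False using c Hu by simp
      qed
    qed
  qed
qed

end
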